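(* Let $g>0$, $p_0<p_1<0$, $[\![\rho]\!]<0$, $\Gamma_{\mathrm{rel}}>0$, and let $Q(\lambda)=\dfrac{2g[\![\rho]\!](p_1-p_0)}{\lambda}+\Gamma_{\mathrm{rel}}^2-\lambda^2$ for $\lambda>0$. For each integer $n\ge1$ such that $$\frac{g[\![\rho]\!]}{n}-\Gamma_{\mathrm{rel}}^2\coth\Big(\frac{np_1}{\Gamma_{\mathrm{rel}}}\Big)<0,$$ $Q$ is an invertible function of $\lambda$ in a neighborhood of $\lambda_n^*$, where $\lambda_n^*>0$ is the unique solution of $\frac{g[\![\rho]\!]}{n}=\Gamma_{\mathrm{rel}}^2\coth(\frac{np_1}{\Gamma_{\mathrm{rel}}})-\lambda^2\coth(\frac{n(p_1-p_0)}{\lambda})$.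
   Context: $[\![\rho]\!]=\rho_{\mathrm{air}}-\rho_{\mathrm{water}}<0$ is the density jump across the air–water interface, $g$ the gravitational constant; $Q(\lambda)$ is the Bernoulli-type constant of the laminar irrotational two-layer flow with water-region parameter $\lambda$ and air relative circulation $\Gamma_{\mathrm{rel}}$. *)

theory Defs
  imports "HOL-Analysis.Analysis"
begin

definition coth :: "real \<Rightarrow> real" where
  "coth x = cosh x / sinh x"

text \<open>Bernoulli-type constant Q(lambda); rho denotes the density jump [[rho]].\<close>
definition Qfun :: "real \<Rightarrow> real \<Rightarrow> real \<Rightarrow> real \<Rightarrow> real \<Rightarrow> real \<Rightarrow> real" where
  "Qfun g rho p0 p1 Grel lam = 2 * g * rho * (p1 - p0) / lam + Grel^2 - lam^2"

definition lam_eq :: "real \<Rightarrow> real \<Rightarrow> real \<Rightarrow> real \<Rightarrow> real \<Rightarrow> nat \<Rightarrow> real \<Rightarrow> bool" where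
  "lam_eq g rho p0 p1 Grel n lam \<longleftrightarrow>
     g * rho / real n = Grel^2 * coth (real n * p1 / Grel) - lam^2 * coth (real n * (p1 - p0) / lam)"

end

theory Submission
  imports Defs
begin

lemma aux1: "(E::real) > 0 \<Longrightarrow> E*E \<noteq> 1 \<Longrightarrow> ((E + 1/E)/2) / ((E - 1/E)/2) = 1 + 2 / (E*E - 1)"
  by (simp add: field_simps)
lemma coth_exp: "t \<noteq> 0 \<Longrightarrow> coth t = 1 + 2 / (exp (2*t) - 1)"
proof -
  assume t: "t \<noteq> 0"
  have s: "sinh t = (exp t - 1/exp t)/2" by (simp add: sinh_field_def exp_minus inverse_eq_divide)
  have c: "cosh t = (exp t + 1/exp t)/2" by (simp add: cosh_field_def exp_minus inverse_eq_divide)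
  have e2: "exp (2*t) = exp t * exp t" by (metis exp_add mult_2)
  have e: "exp t * exp t \<noteq> 1" using t by (simp add: exp_add[symmetric] mult_2[symmetric])
  show ?thesis unfolding coth_def s c e2 using aux1[OF exp_gt_zero e] .
qed

lemma coth_pos: "t > 0 \<Longrightarrow> coth t > 0"
  by (simp add: coth_def)

lemma coth_neg: "t < 0 \<Longrightarrow> coth t < 0"
  by (simp add: coth_def divide_pos_neg)

lemma coth_le: "t > 0 \<Longrightarrow> coth t \<le> 1 + 1 / t"
proof -
  assume t: "t > 0"
  have "1 + 2*t \<le> exp (2*t)" using exp_ge_add_one_self[of "2*t"] by simp
  hence "2 / (exp (2*t) - 1) \<le> 1 / t" using t by (simp add: field_simps)
  thus ?thesis using coth_exp[of t] t by simp
qed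

lemma coth_mono: "0 < a \<Longrightarrow> a < t \<Longrightarrow> coth t < coth a"
proof -
  assume st: "0 < a" "a < t"
  have "exp (2*a) < exp (2*t)" using st by simp
  moreover have "1 < exp (2*a)" using st by simp
  ultimately have "2 / (exp (2*t) - 1) < 2 / (exp (2*a) - 1)"
    by (simp add: divide_strict_left_mono)
  thus ?thesis using coth_exp[of t] coth_exp[of a] st by simp
qed

lemma sinh_lt: "(t::real) > 0 \<Longrightarrow> sinh t < t * cosh t"
proof -
  assume t: "t > 0"
  have d: "\<And>x. DERIV (\<lambda>x. x * cosh x - sinh x) x :> x * sinh x"
    by (auto intro!: derivative_eq_intros)
  obtain z where z: "0 < z" "z < t" "(t * cosh t - sinh t) - (0 * cosh 0 - sinh 0) = (t - 0) * (z * sinh z)"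
    using MVT2[of 0 t "\<lambda>x. x * cosh x - sinh x" "\<lambda>x. x * sinh x"] t d by blast
  have "(t - 0) * (z * sinh z) > 0" using z t by simp
  thus ?thesis using z(3) by simp
qed

lemma coth_gt: "t > 0 \<Longrightarrow> coth t > 1 / t"
  using sinh_lt[of t] by (simp add: coth_def field_simps)


lemma Qinc_aux:
  fixes x y K :: real
  assumes "0 < x" "x < y" "y^3 < K"
  shows "-2*K/x - x^2 < -2*K/y - y^2"
proof -
  have "x*y*(x+y) < y*y*(y+y)"
  proof -
    have "x*y < y*y" using assms by simp
    moreover have "x+y < y+y" using assms by simp
    moreover have "0 < y*y" "0 \<le> x+y" using assms by auto
    ultimately show ?thesis using mult_strict_mono by blast
  qed
  hence k: "x*y*(x+y) < 2*K" using assms(3) by (simp add: power3_eq_cube algebra_simps)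
  have "(-2*K/y - y^2) - (-2*K/x - x^2) = (y - x) * (2*K - x*y*(x+y)) / (x*y)"
    using assms by (simp add: field_simps power2_eq_square)
  also have "\<dots> > 0" using assms k by simp
  finally show ?thesis by simp
qed

lemma h_mono:
  fixes d x y :: real
  assumes "d > 0" "0 < x" "x < y"
  shows "x^2 * coth (d/x) < y^2 * coth (d/y)"
proof -
  have "d/y < d/x" using assms by (simp add: divide_strict_left_mono)
  hence c: "coth (d/x) < coth (d/y)" using coth_mono[of "d/y" "d/x"] assms by simp
  have p: "coth (d/x) > 0" using coth_pos assms by simp
  have "x^2 < y^2" using assms by (simp add: power_strict_mono)
  hence "x^2 * coth (d/x) < y^2 * coth (d/x)" using p by simp
  also have "\<dots> < y^2 * coth (d/y)" using c assms by simp
  finally show ?thesis .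
qed

lemma h_cont:
  fixes d lo hi :: real
  assumes "d > 0" "0 < lo"
  shows "continuous_on {lo..hi} (\<lambda>l. l^2 * coth (d/l))"
  unfolding coth_def using assms
  by (auto intro!: continuous_intros)


theorem lemma3p4:
  fixes g rho p0 p1 Grel :: real and n :: nat
  assumes "g > 0" and "p0 < p1" and "p1 < 0" and "rho < 0" and "Grel > 0"
    and "n \<ge> 1"
    and "g * rho / real n - Grel^2 * coth (real n * p1 / Grel) < 0"
  shows "\<exists>lam. lam > 0 \<and> lam_eq g rho p0 p1 Grel n lam
           \<and> (\<forall>mu. mu > 0 \<and> lam_eq g rho p0 p1 Grel n mu \<longrightarrow> mu = lam)
           \<and> (\<exists>e>0. e \<le> lam \<and> inj_on (Qfun g rho p0 p1 Grel) (ball lam e))"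
proof -
  define d where "d = real n * (p1 - p0)"
  define C where "C = Grel^2 * coth (real n * p1 / Grel) - g * rho / real n"
  define K where "K = - g * rho * (p1 - p0)"
  define h where "h = (\<lambda>l::real. l^2 * coth (d/l))"
  have n0: "real n > 0" using assms by simp
  have d0: "d > 0" using assms n0 by (simp add: d_def)
  have C0: "C > 0" using assms(7) by (simp add: C_def)
  have gr: "g*rho < 0" using assms by (simp add: mult_pos_neg)
  have K0: "K > 0" using gr assms unfolding K_def by (simp add: mult_neg_pos)
  have cn: "coth (real n * p1 / Grel) < 0"
    using assms n0 by (intro coth_neg) (simp add: divide_neg_pos mult_pos_neg)
  have CK: "C < K / d"
  proof -
    have "- g * rho / real n = K / d" using n0 assms by (simp add: K_def d_def field_simps)
    moreover have "Grel^2 * coth (real n * p1 / Grel) < 0" using cn assms(5) by (simp add: mult_pos_neg)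
    ultimately show ?thesis by (simp add: C_def)
  qed
  have eqv: "lam_eq g rho p0 p1 Grel n l \<longleftrightarrow> h l = C" for l
    by (auto simp: lam_eq_def h_def C_def d_def)
  have hgt: "h l > l^3 / d" if "l > 0" for l
  proof -
    have "coth (d/l) > l/d" using coth_gt[of "d/l"] that d0 by simp
    hence "l^2 * coth (d/l) > l^2 * (l/d)" using that by (intro mult_strict_left_mono) auto
    thus ?thesis by (simp add: h_def power3_eq_cube power2_eq_square)
  qed
  define hi where "hi = max 1 (C*d)"
  define lo where "lo = min 1 (C / (2*(1+1/d)))"
  have "0 < 1/d" using d0 by simp
  hence q0: "0 < 1+1/d" by (simp add: add_pos_pos)
  hence "0 < 2*(1+1/d)" by (simp only: mult_pos_pos zero_less_numeral)
  hence "0 < C / (2*(1+1/d))" using C0 by (intro divide_pos_pos)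
  hence lo0: "lo > 0" by (simp add: lo_def)
  have lohi: "lo \<le> hi" by (simp add: lo_def hi_def)
  have h1: "1 \<le> hi" by (simp add: hi_def)
  have "hi \<le> hi^3" using power_increasing[of 1 3 hi] h1 by simp
  hence "C*d \<le> hi^3" by (simp add: hi_def)
  hence "C \<le> hi^3/d" using d0 by (simp add: pos_le_divide_eq)
  hence hhi: "C \<le> h hi" using hgt[of hi] h1 by simp
  have hlo: "h lo \<le> C"
  proof -
    have "coth (d/lo) \<le> 1 + lo/d" using coth_le[of "d/lo"] lo0 d0 by simp
    hence "h lo \<le> lo^2 * (1 + lo/d)" using lo0 by (simp add: h_def)
    also have "\<dots> \<le> lo * (1 + 1/d)"
    proof -
      have "lo \<le> 1" by (simp add: lo_def)
      hence "lo^2 \<le> lo" "lo^2 * (lo/d) \<le> lo * (1/d)" using lo0 d0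
        by (auto simp: power2_eq_square field_simps mult_le_one)
      thus ?thesis by (simp add: algebra_simps)
    qed
    also have "\<dots> \<le> C / (2*(1+1/d)) * (1+1/d)"
      using q0 by (intro mult_right_mono) (auto simp: lo_def)
    also have "\<dots> = C / 2"
    proof -
      have "\<And>q::real. q > 0 \<Longrightarrow> C/(2*q)*q = C/2" by (simp add: field_simps)
      thus ?thesis using q0 by blast
    qed
    finally show ?thesis using C0 by simp
  qed
  obtain lam where lam: "lo \<le> lam" "lam \<le> hi" "h lam = C"
    using IVT'[of h lo C hi] hlo hhi lohi h_cont[OF d0 lo0, of hi] unfolding h_def by auto
  have lam0: "lam > 0" using lam lo0 by simp
  have uniq: "mu = lam" if "mu > 0" "h mu = C" for mu
  proof -
    have "\<not> mu < lam"
    proof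
      assume "mu < lam"
      hence "h mu < h lam" using h_mono[OF d0 that(1), of lam] by (simp add: h_def)
      thus False using lam(3) that(2) by simp
    qed
    moreover have "\<not> lam < mu"
    proof
      assume "lam < mu"
      hence "h lam < h mu" using h_mono[OF d0 lam0, of mu] by (simp add: h_def)
      thus False using lam(3) that(2) by simp
    qed
    ultimately show ?thesis by simp
  qed
  have l3: "lam^3 < K"
  proof -
    have "lam^3 / d < K / d" using hgt[OF lam0] lam(3) CK by simp
    thus ?thesis using d0 by (auto simp: field_simps)
  qed
  define r where "r = root 3 K"
  have r3: "r^3 = K" using K0 by (simp add: r_def)
  have lr: "lam < r"
    using l3 r3 K0 power_less_imp_less_base[of lam 3 r] by (simp add: r_def)
  define e where "e = min lam (r - lam)"
  have e0: "e > 0" using lam0 lr by (simp add: e_def)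
  have Qf: "Qfun g rho p0 p1 Grel x = -2*K/x - x^2 + Grel^2" for x
    by (simp add: Qfun_def K_def)
  have inj: "inj_on (Qfun g rho p0 p1 Grel) (ball lam e)"
  proof (rule linorder_inj_onI)
    fix x y assume xy: "x < y" "x \<in> ball lam e" "y \<in> ball lam e"
    have "0 < x" "y < r" using xy by (auto simp: e_def dist_real_def)
    moreover have "y^3 < K" using \<open>y < r\<close> xy(1) \<open>0 < x\<close> r3
      power_strict_mono[of y r 3] by simp
    ultimately have "-2*K/x - x^2 < -2*K/y - y^2" using Qinc_aux xy(1) by blast
    thus "Qfun g rho p0 p1 Grel x \<noteq> Qfun g rho p0 p1 Grel y" unfolding Qf by simp
  qed auto
  have le: "e \<le> lam" by (simp add: e_def)
  have A: "lam_eq g rho p0 p1 Grel n lam" using lam(3) eqv by blast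
  have B: "\<forall>mu. mu > 0 \<and> lam_eq g rho p0 p1 Grel n mu \<longrightarrow> mu = lam"
    using uniq eqv by blast
  have D: "\<exists>e>0. e \<le> lam \<and> inj_on (Qfun g rho p0 p1 Grel) (ball lam e)"
    using e0 le inj by blast
  show ?thesis using lam0 A B D by blast
qed

end
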